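(* Let $a,b\in\mathbb R$, $a<b$, let $f_1,f_2:[a,b]\to[0,+\infty)$ and $g:(0,+\infty)\to\mathbb R$ be continuous, with $f_i>0$ on $(a,b)$ for $i=1,2$ and $g$ nondecreasing. Assume $\overline D^2f_1(x)\ge g(f_1(x))$ and $\underline D^2f_2(x)\le g(f_2(x))$ for every $x\in(a,b)$. Then: (1) if $f_1(a)=f_2(a)$ and $f_1(a')>f_2(a')$ for some $a'\in(a,b]$, then $f_1(x)>f_2(x)$ for every $x\in[a',b]$; (2) if $f_1(b)=f_2(b)$ and $f_1(b')>f_2(b')$ for some $b'\in[a,b)$, then $f_1(x)>f_2(x)$ for every $x\in[a,b']$; (3) if $f_1(a)=f_2(a)$ and $f_1(b)=f_2(b)$, then $f_2(x)\ge f_1(x)$ for every $x\in[a,b]$; moreover, if $f_2(x_0)=f_1(x_0)$ for some $x_0\in(a,b)$, then the right derivatives of $f_1,f_2$ at $x_0$ coincide and the left derivatives of $f_1,f_2$ at $x_0$ coincide (these one-sided derivatives exist).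
   Context: $\overline D^2f(x)=\limsup_{h\to0^+}\frac{f(x+h)+f(x-h)-2f(x)}{h^2}$ and $\underline D^2f(x)=\liminf_{h\to0^+}\frac{f(x+h)+f(x-h)-2f(x)}{h^2}$. *)

theory Defs
  imports "HOL-Analysis.Analysis"
begin

definition upper_D2 :: "(real \<Rightarrow> real) \<Rightarrow> real \<Rightarrow> ereal" where
  "upper_D2 f x = Limsup (at_right 0) (\<lambda>h. ereal ((f (x + h) + f (x - h) - 2 * f x) / h\<^sup>2))"

definition lower_D2 :: "(real \<Rightarrow> real) \<Rightarrow> real \<Rightarrow> ereal" where
  "lower_D2 f x = Liminf (at_right 0) (\<lambda>h. ereal ((f (x + h) + f (x - h) - 2 * f x) / h\<^sup>2))"

end

theory Submission imports Defs begin

lemma chordA: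
  fixes F :: "real \<Rightarrow> real"
  assumes Fc: "continuous_on {u..v} F" and D: "\<forall>x\<in>{u<..<v}. upper_D2 F x \<ge> ereal c"
    and up: "u \<le> p" and py: "p < y" and yq: "y < q" and qv: "q \<le> v"
  shows "(F y - c/2*y\<^sup>2 - (F p - c/2*p\<^sup>2)) * (q - p) \<le> (F q - c/2*q\<^sup>2 - (F p - c/2*p\<^sup>2)) * (y - p)"
proof (rule ccontr)
  define K where "K x = F x - c/2*x^2" for x
  define s where "s = (K q - K p)/(q-p)"
  assume "\<not> ?thesis"
  then have A: "(K y - K p)*(q-p) > (K q - K p)*(y-p)" by (simp add: K_def)
  define \<eta> where "\<eta> = K y - (K p + s*(y-p))"
  have "s*(y-p) < K y - K p"
  proof -
    have "s*(y-p) = (K q - K p)*(y-p)/(q-p)" by (simp add: s_def)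
    also have "\<dots> < K y - K p" using A py yq by (simp add: pos_divide_less_eq)
    finally show ?thesis .
  qed
  then have eta: "\<eta> > 0" by (simp add: \<eta>_def)
  define \<epsilon> where "\<epsilon> = \<eta>/(q-p)^2"
  have epos: "\<epsilon> > 0" using eta py yq by (simp add: \<epsilon>_def)
  define M where "M x = K x - (K p + s*(x-p)) + \<epsilon>*(x-p)*(x-q)" for x
  have Mc: "continuous_on {p..q} M"
  proof -
    have "continuous_on {p..q} F" using up qv by (intro continuous_on_subset[OF Fc]) auto
    then show ?thesis unfolding M_def K_def by (intro continuous_intros)
  qed
  obtain z where z: "z \<in> {p..q}" "\<forall>x\<in>{p..q}. M x \<le> M z"
    using continuous_attains_sup[OF compact_Icc _ Mc] py yq by auto
  have "(y-p)*(q-y) < (q-p)^2"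
  proof -
    have "(y-p)*(q-y) < (q-p)*(q-p)" using py yq by (intro mult_strict_mono) auto
    then show ?thesis by (simp add: power2_eq_square)
  qed
  then have "\<epsilon>*((y-p)*(q-y)) < \<epsilon>*(q-p)^2" using epos by simp
  also have "\<epsilon>*(q-p)^2 = \<eta>" using py yq by (simp add: \<epsilon>_def)
  finally have My: "M y > 0" unfolding M_def \<eta>_def by (simp add: algebra_simps)
  have Mp: "M p = 0" by (simp add: M_def)
  have Mq: "M q = 0" using py yq by (simp add: M_def s_def)
  have "M y \<le> M z" using z(2) py yq by auto
  then have Mz: "M z > 0" using My by linarith
  have zp: "p < z" and zq: "z < q" using z Mz Mp Mq by (auto simp: le_less)
  have ev: "eventually (\<lambda>h. ereal ((F (z + h) + F (z - h) - 2 * F z) / h\<^sup>2) \<le> ereal (c - 2*\<epsilon>)) (at_right 0)"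
    using eventually_at_right_real[of 0 "min (z-p) (q-z)"] zp zq
  proof -
    have "eventually (\<lambda>h. h \<in> {0<..<min (z-p) (q-z)}) (at_right 0)"
      using eventually_at_right_real[of 0 "min (z-p) (q-z)"] zp zq by simp
    then show ?thesis
  proof (elim eventually_mono)
    fix h assume h: "h \<in> {0<..<min (z-p) (q-z)}"
    have "M (z+h) \<le> M z" "M (z-h) \<le> M z" using z h by auto
    moreover have "M (z+h) + M (z-h) - 2*M z = F (z + h) + F (z - h) - 2 * F z - c*h^2 + 2*\<epsilon>*h^2"
      by (simp add: M_def K_def power2_eq_square algebra_simps)
    ultimately have "F (z + h) + F (z - h) - 2 * F z \<le> (c - 2*\<epsilon>)*h^2" by (simp add: algebra_simps)
    then show "ereal ((F (z + h) + F (z - h) - 2 * F z) / h\<^sup>2) \<le> ereal (c - 2*\<epsilon>)"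
      using h by (simp add: pos_divide_le_eq)
  qed
  qed
  have "upper_D2 F z \<le> ereal (c - 2*\<epsilon>)"
    unfolding upper_D2_def by (rule Limsup_bounded[OF ev])
  moreover have "upper_D2 F z \<ge> ereal c" using D up qv zp zq by auto
  ultimately have "ereal c \<le> ereal (c - 2*\<epsilon>)" by (rule order_trans[rotated])
  then show False using epos by simp
qed

lemma chordC:
  fixes K :: "real \<Rightarrow> real"
  assumes r: "r > 0"
    and CH: "\<And>p y q. x0 - r \<le> p \<Longrightarrow> p < y \<Longrightarrow> y < q \<Longrightarrow> q \<le> x0 + r \<Longrightarrow>
               (K y - K p)*(q-p) \<le> (K q - K p)*(y-p)"
  shows "\<exists>dr dl. (K has_real_derivative dr) (at_right x0) \<and> (K has_real_derivative dl) (at_left x0) \<and> dl \<le> dr"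
proof -
  define S where "S y = (K y - K x0)/(y - x0)" for y
  have i: "S a \<le> S b" if "x0 < a" "a \<le> b" "b \<le> x0 + r" for a b
  proof (cases "a = b")
    case False
    then have "(K a - K x0)*(b-x0) \<le> (K b - K x0)*(a-x0)" using that CH[of x0 a b] r by auto
    then show ?thesis using that False unfolding S_def
      by (simp add: divide_simps mult.commute)
  qed simp
  have ii: "S a \<le> S b" if "x0 - r \<le> a" "a < x0" "x0 < b" "b \<le> x0 + r" for a b
  proof -
    have "(K x0 - K a)*(b-a) \<le> (K b - K a)*(x0-a)" using that CH[of a x0 b] by auto
    then have "(K x0 - K a)*(b-x0) \<le> (K b - K x0)*(x0-a)" by (simp add: algebra_simps)
    then show ?thesis using that unfolding S_def
      by (simp add: divide_simps) (simp add: algebra_simps)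
  qed
  have iii: "S a \<le> S b" if "x0 - r \<le> a" "a \<le> b" "b < x0" for a b
  proof (cases "a = b")
    case False
    then have "(K b - K a)*(x0-a) \<le> (K x0 - K a)*(b-a)" using that CH[of a b x0] r by auto
    then have "(K x0 - K a)*(x0-b) \<le> (K x0 - K b)*(x0-a)" by (simp add: algebra_simps)
    then show ?thesis using that False unfolding S_def
      by (simp add: divide_simps) (simp add: algebra_simps)
  qed simp
  have R: "(S \<longlongrightarrow> Inf (S ` ({x0<..} \<inter> {x0<..x0+r}))) (at x0 within ({x0<..} \<inter> {x0<..x0+r}))"
    by (rule Lim_right_bound[where K="S (x0 - r)"]) (use i ii r in auto)
  have e1: "at x0 within ({x0<..} \<inter> {x0<..x0+r}) = at_right x0"
    by (rule at_within_nhd[of _ "{x0-r<..<x0+r}"]) (use r in auto)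
  have L: "(S \<longlongrightarrow> Sup (S ` ({..<x0} \<inter> {x0-r..<x0}))) (at x0 within ({..<x0} \<inter> {x0-r..<x0}))"
    by (rule Lim_left_bound[where K="S (x0 + r)"]) (use iii ii r in auto)
  have e2: "at x0 within ({..<x0} \<inter> {x0-r..<x0}) = at_left x0"
    by (rule at_within_nhd[of _ "{x0-r<..<x0+r}"]) (use r in auto)
  define dr where "dr = Inf (S ` ({x0<..} \<inter> {x0<..x0+r}))"
  define dl where "dl = Sup (S ` ({..<x0} \<inter> {x0-r..<x0}))"
  have R': "(S \<longlongrightarrow> dr) (at_right x0)" using R e1 dr_def by simp
  have L': "(S \<longlongrightarrow> dl) (at_left x0)" using L e2 dl_def by simp
  have "dl \<le> S b" if "x0 < b" "b \<le> x0 + r" for b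
  proof (rule tendsto_upperbound[OF L'])
    have "eventually (\<lambda>y. y \<in> {x0-r<..<x0}) (at_left x0)"
      using eventually_at_left_real r by simp
    then show "eventually (\<lambda>y. S y \<le> S b) (at_left x0)"
      by eventually_elim (use ii that in auto)
  qed simp
  then have "dl \<le> dr"
  proof -
    assume H: "\<And>b. x0 < b \<Longrightarrow> b \<le> x0 + r \<Longrightarrow> dl \<le> S b"
    show ?thesis
    proof (rule tendsto_lowerbound[OF R'])
      have "eventually (\<lambda>y. y \<in> {x0<..<x0+r}) (at_right x0)"
        using eventually_at_right_real r by simp
      then show "eventually (\<lambda>y. dl \<le> S y) (at_right x0)"
        by eventually_elim (use H in auto)
    qed simp
  qed
  moreover have "(K has_real_derivative dr) (at_right x0)"
    using R' unfolding has_field_derivative_iff S_def .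
  moreover have "(K has_real_derivative dl) (at_left x0)"
    using L' unfolding has_field_derivative_iff S_def .
  ultimately show ?thesis by blast
qed

lemma midA:
  fixes F :: "real \<Rightarrow> real"
  assumes Fc: "continuous_on {u..v} F" and D: "\<forall>x\<in>{u<..<v}. upper_D2 F x \<ge> ereal c"
    and "u \<le> z - t" "z + t \<le> v" "t > 0"
  shows "F (z+t) + F (z-t) - 2 * F z \<ge> c * t^2"
proof -
  have "(F z - c/2*z\<^sup>2 - (F (z-t) - c/2*(z-t)\<^sup>2)) * ((z+t) - (z-t))
     \<le> (F (z+t) - c/2*(z+t)\<^sup>2 - (F (z-t) - c/2*(z-t)\<^sup>2)) * (z - (z-t))"
    using assms by (intro chordA[OF Fc D]) auto
  then have "(2*(F z - c/2*z\<^sup>2 - (F (z-t) - c/2*(z-t)\<^sup>2))) * t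
     \<le> (F (z+t) - c/2*(z+t)\<^sup>2 - (F (z-t) - c/2*(z-t)\<^sup>2)) * t"
    by (simp add: algebra_simps)
  then have "2*(F z - c/2*z\<^sup>2 - (F (z-t) - c/2*(z-t)\<^sup>2))
     \<le> (F (z+t) - c/2*(z+t)\<^sup>2 - (F (z-t) - c/2*(z-t)\<^sup>2))"
    using \<open>t > 0\<close> by (simp add: mult_le_cancel_right_pos)
  then show ?thesis by (simp add: power2_eq_square algebra_simps)
qed

lemma derivC:
  fixes F :: "real \<Rightarrow> real"
  assumes r: "r > 0" and Fc: "continuous_on {x0-r..x0+r} F"
    and D: "\<forall>x\<in>{x0-r<..<x0+r}. upper_D2 F x \<ge> ereal c"
  shows "\<exists>dr dl. (F has_real_derivative dr) (at_right x0) \<and> (F has_real_derivative dl) (at_left x0) \<and> dl \<le> dr"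
proof -
  define K where "K y = F y - c/2*y^2" for y
  have "\<exists>dr dl. (K has_real_derivative dr) (at_right x0) \<and> (K has_real_derivative dl) (at_left x0) \<and> dl \<le> dr"
    by (rule chordC[OF r]) (unfold K_def, rule chordA[OF Fc D], auto)
  then obtain dr dl where d: "(K has_real_derivative dr) (at_right x0)" "(K has_real_derivative dl) (at_left x0)" "dl \<le> dr"
    by blast
  have FK: "F = (\<lambda>y. K y + c/2*y^2)" by (simp add: K_def fun_eq_iff)
  have q: "((\<lambda>y. c/2*y^2) has_real_derivative c*x0) (at x0 within S)" for S
    by (auto intro!: derivative_eq_intros)
  have "(F has_real_derivative dr + c*x0) (at_right x0)"
    unfolding FK by (intro DERIV_add d q)
  moreover have "(F has_real_derivative dl + c*x0) (at_left x0)"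
    unfolding FK by (intro DERIV_add d q)
  ultimately show ?thesis using d(3) by (intro exI[of _ "dr + c*x0"] exI[of _ "dl + c*x0"]) auto
qed

lemma upper_D2_uminus: "upper_D2 (\<lambda>y. - F y) x = - lower_D2 F x"
proof -
  have "(\<lambda>h. ereal ((- F (x + h) + - F (x - h) - 2 * - F x) / h\<^sup>2))
       = (\<lambda>h. - ereal ((F (x + h) + F (x - h) - 2 * F x) / h\<^sup>2))"
  proof (rule ext)
    fix h
    have e: "(- F (x + h) + - F (x - h) - 2 * - F x) = - (F (x + h) + F (x - h) - 2 * F x)" by simp
    show "ereal ((- F (x + h) + - F (x - h) - 2 * - F x) / h\<^sup>2) = - ereal ((F (x + h) + F (x - h) - 2 * F x) / h\<^sup>2)"
      unfolding e minus_divide_left[symmetric] by simp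
  qed
  then show ?thesis
    by (simp only: upper_D2_def lower_D2_def ereal_Limsup_uminus)
qed

lemma cont_gf:
  fixes f g :: "real \<Rightarrow> real"
  assumes "continuous_on {a..b} f" "\<forall>x\<in>{a<..<b}. f x > 0" "continuous_on {0<..} g" "z \<in> {a<..<b}"
  shows "isCont (\<lambda>y. g (f y)) z"
proof -
  have A: "isCont f z" using continuous_on_interior[OF assms(1)] assms(4) by simp
  have "f z \<in> {0<..}" using assms by auto
  then have B: "isCont g (f z)"
    using assms(3) continuous_on_eq_continuous_at[OF open_greaterThan] by blast
  show ?thesis using isCont_o2[OF A B] .
qed

lemma loc:
  fixes G :: "real \<Rightarrow> real"
  assumes "isCont G z" "\<epsilon> > 0" "a < z" "z < b"
  shows "\<exists>r>0. a < z - r \<and> z + r < b \<and> (\<forall>y. \<bar>y - z\<bar> \<le> r \<longrightarrow> G y > G z - \<epsilon>)"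
proof -
  have "eventually (\<lambda>y. G y > G z - \<epsilon>) (at z)"
    using order_tendstoD(1)[OF assms(1)[unfolded isCont_def]] assms(2) by simp
  then obtain d where d: "d > 0" "\<forall>y. y \<noteq> z \<and> dist y z < d \<longrightarrow> G y > G z - \<epsilon>"
    unfolding eventually_at by auto
  define r where "r = min (d/2) (min ((z-a)/2) ((b-z)/2))"
  have "r > 0" using d assms by (simp add: r_def)
  moreover have "r \<le> (z-a)/2" "r \<le> (b-z)/2" unfolding r_def by linarith+
  then have "a < z - r" "z + r < b" using assms by auto
  moreover have "\<forall>y. \<bar>y - z\<bar> \<le> r \<longrightarrow> G y > G z - \<epsilon>"
  proof (intro allI impI)
    fix y assume "\<bar>y - z\<bar> \<le> r"
    then show "G y > G z - \<epsilon>"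
      using d assms by (cases "y = z") (auto simp: r_def dist_real_def)
  qed
  ultimately show ?thesis by blast
qed


lemma lemB:
  fixes a b p q y :: real and f1 f2 g :: "real \<Rightarrow> real"
  assumes f1c: "continuous_on {a..b} f1" and f2c: "continuous_on {a..b} f2"
    and f1pos: "\<forall>x\<in>{a<..<b}. f1 x > 0" and f2pos: "\<forall>x\<in>{a<..<b}. f2 x > 0"
    and gc: "continuous_on {0<..} g" and gmono: "mono_on {0<..} g"
    and D1: "\<forall>x\<in>{a<..<b}. upper_D2 f1 x \<ge> ereal (g (f1 x))"
    and D2: "\<forall>x\<in>{a<..<b}. lower_D2 f2 x \<le> ereal (g (f2 x))"
    and ap: "a \<le> p" and pq: "p < q" and qb: "q \<le> b" and hp: "f1 p = f2 p" and hq: "f1 q = f2 q"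
    and py: "p \<le> y" and yq: "y \<le> q"
  shows "f1 y \<le> f2 y"
proof (rule ccontr)
  assume "\<not> f1 y \<le> f2 y"
  define \<eta> where "\<eta> = f1 y - f2 y"
  have eta: "\<eta> > 0" using \<open>\<not> f1 y \<le> f2 y\<close> by (simp add: \<eta>_def)
  have py': "p < y" and yq': "y < q" using py yq hp hq eta \<eta>_def by (auto simp: le_less)
  define \<epsilon> where "\<epsilon> = \<eta>/(q-p)^2"
  have epos: "\<epsilon> > 0" using eta pq by (simp add: \<epsilon>_def)
  define M where "M x = f1 x - f2 x + \<epsilon>*(x-p)*(x-q)" for x
  have Mc: "continuous_on {p..q} M"
  proof -
    have "continuous_on {p..q} f1" using ap qb by (intro continuous_on_subset[OF f1c]) auto
    moreover have "continuous_on {p..q} f2" using ap qb by (intro continuous_on_subset[OF f2c]) auto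
    ultimately show ?thesis unfolding M_def by (intro continuous_intros)
  qed
  obtain z where z: "z \<in> {p..q}" "\<forall>x\<in>{p..q}. M x \<le> M z"
    using continuous_attains_sup[OF compact_Icc _ Mc] pq by auto
  have "(y-p)*(q-y) < (q-p)^2"
  proof -
    have "(y-p)*(q-y) < (q-p)*(q-p)" using py' yq' by (intro mult_strict_mono) auto
    then show ?thesis by (simp add: power2_eq_square)
  qed
  then have "\<epsilon>*((y-p)*(q-y)) < \<epsilon>*(q-p)^2" using epos by simp
  also have "\<epsilon>*(q-p)^2 = \<eta>" using pq by (simp add: \<epsilon>_def)
  finally have My: "M y > 0" unfolding M_def \<eta>_def by (simp add: algebra_simps)
  have Mp: "M p = 0" using hp by (simp add: M_def)
  have Mq: "M q = 0" using hq by (simp add: M_def)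
  have "M y \<le> M z" using z(2) py yq by auto
  then have Mz: "M z > 0" using My by linarith
  have zp: "p < z" and zq: "z < q" using z Mz Mp Mq by (auto simp: le_less)
  have "\<epsilon>*(z-p)*(z-q) < 0" using epos zp zq by (simp add: mult_pos_neg)
  then have hz: "f1 z > f2 z" using Mz by (simp add: M_def)
  have zab: "z \<in> {a<..<b}" using zp zq ap qb by auto
  have gz: "g (f2 z) \<le> g (f1 z)"
    using gmono hz f1pos f2pos zab by (intro mono_onD[OF gmono]) auto
  obtain r where r: "r > 0" "a < z - r" "z + r < b" "\<forall>x. \<bar>x - z\<bar> \<le> r \<longrightarrow> g (f1 x) > g (f1 z) - \<epsilon>"
    using loc[OF cont_gf[OF f1c f1pos gc zab] epos, of a b] zab by auto
  define \<rho> where "\<rho> = min r (min (z-p) (q-z))"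
  have rho: "\<rho> > 0" "\<rho> \<le> r" "\<rho> \<le> z - p" "\<rho> \<le> q - z" using r zp zq by (auto simp: \<rho>_def)
  define c where "c = g (f1 z) - \<epsilon>"
  have f1c': "continuous_on {z-\<rho>..z+\<rho>} f1" using r rho by (intro continuous_on_subset[OF f1c]) auto
  have D1': "\<forall>x\<in>{z-\<rho><..<z+\<rho>}. upper_D2 f1 x \<ge> ereal c"
  proof
    fix x assume x: "x \<in> {z-\<rho><..<z+\<rho>}"
    then have "x \<in> {a<..<b}" using r rho by auto
    then have "upper_D2 f1 x \<ge> ereal (g (f1 x))" using D1 by auto
    moreover have "g (f1 x) > c" using r(4) x rho by (auto simp: c_def)
    ultimately show "upper_D2 f1 x \<ge> ereal c" by (meson ereal_less_eq(3) le_less order_trans)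
  qed
  have ev: "eventually (\<lambda>t. ereal (g (f2 z) + \<epsilon>) \<le> ereal ((f2 (z + t) + f2 (z - t) - 2 * f2 z) / t\<^sup>2)) (at_right 0)"
  proof -
    have "eventually (\<lambda>t. t \<in> {0<..<\<rho>}) (at_right 0)"
      using eventually_at_right_real[of 0 \<rho>] rho by simp
    then show ?thesis
    proof (elim eventually_mono)
      fix t assume t: "t \<in> {0<..<\<rho>}"
      have A: "f1 (z+t) + f1 (z-t) - 2 * f1 z \<ge> c * t^2"
        by (rule midA[OF f1c' D1']) (use t in auto)
      have "M (z+t) \<le> M z" "M (z-t) \<le> M z" using z t rho by auto
      moreover have "M (z+t) + M (z-t) - 2*M z = (f1 (z+t) + f1 (z-t) - 2 * f1 z) - (f2 (z+t) + f2 (z-t) - 2 * f2 z) + 2*\<epsilon>*t^2"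
        by (simp add: M_def power2_eq_square algebra_simps)
      ultimately have "f2 (z+t) + f2 (z-t) - 2 * f2 z \<ge> (c + 2*\<epsilon>)*t^2" using A by (simp add: algebra_simps)
      moreover have "(g (f2 z) + \<epsilon>)*t^2 \<le> (c + 2*\<epsilon>)*t^2"
        using gz by (intro mult_right_mono) (auto simp: c_def)
      ultimately have "(g (f2 z) + \<epsilon>)*t^2 \<le> f2 (z+t) + f2 (z-t) - 2 * f2 z" by linarith
      then show "ereal (g (f2 z) + \<epsilon>) \<le> ereal ((f2 (z + t) + f2 (z - t) - 2 * f2 z) / t\<^sup>2)"
        using t by (simp add: pos_le_divide_eq)
    qed
  qed
  have "ereal (g (f2 z) + \<epsilon>) \<le> lower_D2 f2 z"
    unfolding lower_D2_def by (rule Liminf_bounded[OF ev])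
  also have "\<dots> \<le> ereal (g (f2 z))" using D2 zab by auto
  finally show False using epos by simp
qed


theorem propositionA4:
  fixes a b :: real and f1 f2 g :: "real \<Rightarrow> real"
  assumes ab: "a < b"
    and f1c: "continuous_on {a..b} f1" and f2c: "continuous_on {a..b} f2"
    and f1nn: "\<forall>x\<in>{a..b}. f1 x \<ge> 0" and f2nn: "\<forall>x\<in>{a..b}. f2 x \<ge> 0"
    and f1pos: "\<forall>x\<in>{a<..<b}. f1 x > 0" and f2pos: "\<forall>x\<in>{a<..<b}. f2 x > 0"
    and gc: "continuous_on {0<..} g" and gmono: "mono_on {0<..} g"
    and D1: "\<forall>x\<in>{a<..<b}. upper_D2 f1 x \<ge> ereal (g (f1 x))"
    and D2: "\<forall>x\<in>{a<..<b}. lower_D2 f2 x \<le> ereal (g (f2 x))"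
  shows "(\<forall>a'\<in>{a<..b}. f1 a = f2 a \<and> f1 a' > f2 a' \<longrightarrow> (\<forall>x\<in>{a'..b}. f1 x > f2 x))
       \<and> (\<forall>b'\<in>{a..<b}. f1 b = f2 b \<and> f1 b' > f2 b' \<longrightarrow> (\<forall>x\<in>{a..b'}. f1 x > f2 x))
       \<and> (f1 a = f2 a \<and> f1 b = f2 b \<longrightarrow>
            (\<forall>x\<in>{a..b}. f2 x \<ge> f1 x) \<and>
            (\<forall>x0\<in>{a<..<b}. f2 x0 = f1 x0 \<longrightarrow>
               (\<exists>dr dl. (f1 has_real_derivative dr) (at_right x0) \<and> (f2 has_real_derivative dr) (at_right x0)
                      \<and> (f1 has_real_derivative dl) (at_left x0) \<and> (f2 has_real_derivative dl) (at_left x0))))"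
proof (intro conjI ballI impI)
  note B = lemB[OF f1c f2c f1pos f2pos gc gmono D1 D2]
  have hc: "continuous_on {a..b} (\<lambda>t. f1 t - f2 t)" using f1c f2c by (intro continuous_intros)
  show "f1 x > f2 x" if a': "a' \<in> {a<..b}" and H: "f1 a = f2 a \<and> f1 a' > f2 a'" and x: "x \<in> {a'..b}" for a' x
  proof (rule ccontr)
    assume "\<not> f1 x > f2 x"
    then have "(\<lambda>t. f1 t - f2 t) x \<le> 0" by simp
    moreover have "0 \<le> (\<lambda>t. f1 t - f2 t) a'" using H by simp
    moreover have "continuous_on {a'..x} (\<lambda>t. f1 t - f2 t)"
      using a' x by (intro continuous_on_subset[OF hc]) auto
    ultimately obtain x1 where x1: "a' \<le> x1" "x1 \<le> x" "f1 x1 - f2 x1 = 0"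
      using IVT2'[of "\<lambda>t. f1 t - f2 t" x 0 a'] x by auto
    have "f1 a' \<le> f2 a'" using x1 a' x H by (intro B[of a x1]) auto
    then show False using H by simp
  qed
  show "f1 x > f2 x" if b': "b' \<in> {a..<b}" and H: "f1 b = f2 b \<and> f1 b' > f2 b'" and x: "x \<in> {a..b'}" for b' x
  proof (rule ccontr)
    assume "\<not> f1 x > f2 x"
    then have "(\<lambda>t. f1 t - f2 t) x \<le> 0" by simp
    moreover have "0 \<le> (\<lambda>t. f1 t - f2 t) b'" using H by simp
    moreover have "continuous_on {x..b'} (\<lambda>t. f1 t - f2 t)"
      using b' x by (intro continuous_on_subset[OF hc]) auto
    ultimately obtain x1 where x1: "x \<le> x1" "x1 \<le> b'" "f1 x1 - f2 x1 = 0"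
      using IVT'[of "\<lambda>t. f1 t - f2 t" x 0 b'] x by auto
    have "f1 b' \<le> f2 b'" using x1 b' x H by (intro B[of x1 b]) auto
    then show False using H by simp
  qed
  assume H: "f1 a = f2 a \<and> f1 b = f2 b"
  have le: "f1 x \<le> f2 x" if "x \<in> {a..b}" for x using H ab that by (intro B[of a b]) auto
  then show "f2 x \<ge> f1 x" if "x \<in> {a..b}" for x using that by blast
  fix x0 assume x0: "x0 \<in> {a<..<b}" and e: "f2 x0 = f1 x0"
  obtain r1 where r1: "r1 > 0" "a < x0 - r1" "x0 + r1 < b" "\<forall>x. \<bar>x - x0\<bar> \<le> r1 \<longrightarrow> g (f1 x) > g (f1 x0) - 1"
    using loc[OF cont_gf[OF f1c f1pos gc x0], of 1 a b] x0 by auto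
  obtain dr1 dl1 where d1: "(f1 has_real_derivative dr1) (at_right x0)" "(f1 has_real_derivative dl1) (at_left x0)" "dl1 \<le> dr1"
  proof -
    have "\<exists>dr dl. (f1 has_real_derivative dr) (at_right x0) \<and> (f1 has_real_derivative dl) (at_left x0) \<and> dl \<le> dr"
    proof (rule derivC[OF r1(1), where c="g (f1 x0) - 1"])
      show "continuous_on {x0 - r1..x0 + r1} f1" using r1 by (intro continuous_on_subset[OF f1c]) auto
      show "\<forall>x\<in>{x0 - r1<..<x0 + r1}. ereal (g (f1 x0) - 1) \<le> upper_D2 f1 x"
      proof
        fix x assume x: "x \<in> {x0 - r1<..<x0 + r1}"
        then have "upper_D2 f1 x \<ge> ereal (g (f1 x))" using D1 r1 by auto
        moreover have "g (f1 x) > g (f1 x0) - 1" using r1(4) x by auto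
        ultimately show "ereal (g (f1 x0) - 1) \<le> upper_D2 f1 x" by (meson ereal_less_eq(3) le_less order_trans)
      qed
    qed
    then show ?thesis using that by blast
  qed
  have cg2: "isCont (\<lambda>x. - g (f2 x)) x0"
    using cont_gf[OF f2c f2pos gc x0] by (intro continuous_intros)
  obtain r2 where r2: "r2 > 0" "a < x0 - r2" "x0 + r2 < b" "\<forall>x. \<bar>x - x0\<bar> \<le> r2 \<longrightarrow> - g (f2 x) > - g (f2 x0) - 1"
    using loc[OF cg2, of 1 a b] x0 by auto
  obtain dr2' dl2' where d2: "((\<lambda>y. - f2 y) has_real_derivative dr2') (at_right x0)"
      "((\<lambda>y. - f2 y) has_real_derivative dl2') (at_left x0)" "dl2' \<le> dr2'"
  proof -
    have "\<exists>dr dl. ((\<lambda>y. - f2 y) has_real_derivative dr) (at_right x0) \<and> ((\<lambda>y. - f2 y) has_real_derivative dl) (at_left x0) \<and> dl \<le> dr"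
    proof (rule derivC[OF r2(1), where c="- g (f2 x0) - 1"])
      show "continuous_on {x0 - r2..x0 + r2} (\<lambda>y. - f2 y)" using r2
        by (intro continuous_intros continuous_on_subset[OF f2c]) auto
      show "\<forall>x\<in>{x0 - r2<..<x0 + r2}. ereal (- g (f2 x0) - 1) \<le> upper_D2 (\<lambda>y. - f2 y) x"
      proof
        fix x assume x: "x \<in> {x0 - r2<..<x0 + r2}"
        then have "lower_D2 f2 x \<le> ereal (g (f2 x))" using D2 r2 by auto
        then have "ereal (- g (f2 x)) \<le> upper_D2 (\<lambda>y. - f2 y) x"
          unfolding upper_D2_uminus by (metis ereal_minus_le_minus uminus_ereal.simps(1))
        moreover have "- g (f2 x) > - g (f2 x0) - 1" using r2(4) x by auto
        ultimately show "ereal (- g (f2 x0) - 1) \<le> upper_D2 (\<lambda>y. - f2 y) x" by (meson ereal_less_eq(3) le_less order_trans)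
      qed
    qed
    then show ?thesis using that by blast
  qed
  have f2m: "f2 = (\<lambda>y. - (- f2 y))" by simp
  have d2r: "(f2 has_real_derivative - dr2') (at_right x0)"
    by (subst f2m, rule DERIV_minus[OF d2(1)])
  have d2l: "(f2 has_real_derivative - dl2') (at_left x0)"
    by (subst f2m, rule DERIV_minus[OF d2(2)])
  have hr: "((\<lambda>y. f1 y - f2 y) has_real_derivative dr1 - - dr2') (at_right x0)"
    by (rule DERIV_diff[OF d1(1) d2r])
  have hl: "((\<lambda>y. f1 y - f2 y) has_real_derivative dl1 - - dl2') (at_left x0)"
    by (rule DERIV_diff[OF d1(2) d2l])
  have "dr1 - - dr2' \<le> 0"
  proof (rule tendsto_upperbound[OF hr[unfolded has_field_derivative_iff]])
    have "eventually (\<lambda>y. y \<in> {x0<..<b}) (at_right x0)"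
      using eventually_at_right_real x0 by simp
    then show "eventually (\<lambda>y. ((f1 y - f2 y) - (f1 x0 - f2 x0)) / (y - x0) \<le> 0) (at_right x0)"
    proof (elim eventually_mono)
      fix y assume y: "y \<in> {x0<..<b}"
      then have "f1 y - f2 y \<le> 0" using le[of y] x0 by auto
      then show "((f1 y - f2 y) - (f1 x0 - f2 x0)) / (y - x0) \<le> 0"
        using e y by (simp add: divide_nonpos_pos)
    qed
  qed simp
  moreover have "dl1 - - dl2' \<ge> 0"
  proof (rule tendsto_lowerbound[OF hl[unfolded has_field_derivative_iff]])
    have "eventually (\<lambda>y. y \<in> {a<..<x0}) (at_left x0)"
      using eventually_at_left_real x0 by simp
    then show "eventually (\<lambda>y. 0 \<le> ((f1 y - f2 y) - (f1 x0 - f2 x0)) / (y - x0)) (at_left x0)"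
    proof (elim eventually_mono)
      fix y assume y: "y \<in> {a<..<x0}"
      then have "f1 y - f2 y \<le> 0" using le[of y] x0 by auto
      then show "0 \<le> ((f1 y - f2 y) - (f1 x0 - f2 x0)) / (y - x0)"
        using e y by (simp add: divide_nonpos_neg)
    qed
  qed simp
  ultimately have eqs: "dr1 = - dr2'" "dl1 = - dl2'" "dl1 = dr1" using d1(3) d2(3) by linarith+
  show "\<exists>dr dl. (f1 has_real_derivative dr) (at_right x0) \<and> (f2 has_real_derivative dr) (at_right x0)
                      \<and> (f1 has_real_derivative dl) (at_left x0) \<and> (f2 has_real_derivative dl) (at_left x0)"
    using d1 d2r d2l eqs by metis
qed

end
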